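(* Let $W\in\mathbb{R}^{n\times n}$ be symmetric with nonnegative entries, $L=\operatorname{diag}(W\mathbf{1})-W$, and let $L=V^T\Lambda V$ be a full spectral decomposition with $V$ orthogonal, $\Lambda=\operatorname{diag}(\lambda_1,\dots,\lambda_n)$, $\lambda_1\le\dots\le\lambda_n$. Define $\tilde A=(\lambda_nI-\Lambda)^{1/2}V$. Let $K\ge1$. Then the ratio-cut problem $$\min_X\operatorname{tr}\{XLX^T\}\ \text{s.t. }X\in\mathcal{H}$$ and the K-means problem $$\min_{D,X}\|\tilde A-DX\|_F^2\ \text{s.t. }X\in\mathcal{H}$$ have the same solutions $X$.
   Context: $\mathbf{1}$ is the all-ones vector, $\operatorname{diag}(v)$ the diagonal matrix with diagonal $v$. $\mathcal{F}$ is the set of matrices $F\in\{0,1\}^{K\times n}$ in which every column has exactly one entry $1$ (rows are cluster indicator vectors, each cluster assumed nonempty), and $\mathcal{H}=\{(FF^T)^{-1/2}F:F\in\mathcal{F}\}$ is the set of normalized indicator matrices. *)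

theory Defs
  imports "HOL-Analysis.Analysis"
begin

definition diag_mat :: "real^'n \<Rightarrow> real^'n^'n" where
  "diag_mat v = (\<chi> i j. if i = j then v $ i else 0)"

definition ones :: "real^'n" where
  "ones = (\<chi> i. 1)"

text \<open>The set F of K x n cluster indicator matrices (rows = clusters, indexed by 'k;
  columns = points, indexed by 'n): 0/1 entries, each column has exactly one 1,
  each cluster (row) nonempty.\<close>
definition indicator_mats :: "(real^'n^'k) set" where
  "indicator_mats = {F. (\<forall>i j. F $ i $ j = 0 \<or> F $ i $ j = 1)
      \<and> (\<forall>j. \<exists>!i. F $ i $ j = 1)
      \<and> (\<forall>i. \<exists>j. F $ i $ j = 1)}"

text \<open>(F F^T)^(-1/2) for F in the set above: F F^T is diagonal with positive
  diagonal, so its inverse square root is the diagonal matrix of the reciprocal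
  square roots of its diagonal entries.\<close>
definition inv_sqrt_diag :: "real^'k^'k \<Rightarrow> real^'k^'k" where
  "inv_sqrt_diag M = diag_mat (\<chi> i. 1 / sqrt (M $ i $ i))"

definition normalized_indicator_mats :: "(real^'n^'k) set" where
  "normalized_indicator_mats =
     {X. \<exists>F\<in>indicator_mats. X = inv_sqrt_diag (F ** transpose F) ** F}"

definition frob_sq :: "real^'n^'m \<Rightarrow> real" where
  "frob_sq M = (\<Sum>i\<in>UNIV. \<Sum>j\<in>UNIV. (M $ i $ j)^2)"

end

theory Submission imports Defs begin

lemma frob_rows: "frob_sq (M::real^'n^'m) = (\<Sum>i\<in>UNIV. norm (M $ i) ^ 2)"
  unfolding frob_sq_def power2_norm_eq_inner inner_vec_def by (simp add: power2_eq_square)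

lemma row_mult: "(D ** X) $ i = (D $ i) v* (X::real^'n^'k)"
  by (simp add: matrix_matrix_mult_def vector_matrix_mult_def vec_eq_iff)

lemma row_id:
  fixes X :: "real^'n^'k" and a :: "real^'n" and d :: "real^'k"
  assumes XX: "X ** transpose X = mat 1"
  shows "norm (a - d v* X) ^ 2 = norm a ^ 2 - norm (X *v a) ^ 2 + norm (d - X *v a) ^ 2"
proof -
  have uu: "inner (d v* X) (d v* X) = inner d d"
  proof -
    have "X *v (d v* X) = X *v (transpose X *v d)" by simp
    also have "\<dots> = d" using XX by (simp only: matrix_vector_mul_assoc matrix_vector_mul_lid)
    finally show ?thesis by (simp only: dot_lmul_matrix)
  qed
  have ua: "inner (d v* X) a = inner d (X *v a)" by (simp add: dot_lmul_matrix)
  show ?thesis using uu ua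
    by (simp add: power2_norm_eq_inner inner_diff_left inner_diff_right inner_commute)
qed

lemma frob_id:
  fixes X :: "real^'n^'k" and A :: "real^'n^'m" and D :: "real^'k^'m"
  assumes XX: "X ** transpose X = mat 1"
  shows "frob_sq (A - D ** X) = frob_sq A - (\<Sum>i\<in>UNIV. norm (X *v A$i)^2) + frob_sq (D - A ** transpose X)"
proof -
  have r: "(A ** transpose X) $ i = X *v A $ i" for i
    by (simp add: matrix_matrix_mult_def matrix_vector_mult_def vec_eq_iff transpose_def mult.commute)
  have "frob_sq (A - D ** X) = (\<Sum>i\<in>UNIV. norm (A$i - D$i v* X)^2)"
    by (simp add: frob_rows row_mult)
  also have "\<dots> = (\<Sum>i\<in>UNIV. norm (A$i)^2 - norm (X *v A$i)^2 + norm (D$i - X *v A$i)^2)"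
    by (rule sum.cong[OF refl], rule row_id[OF XX])
  also have "\<dots> = frob_sq A - (\<Sum>i\<in>UNIV. norm (X *v A$i)^2) + (\<Sum>i\<in>UNIV. norm (D$i - X *v A$i)^2)"
    by (simp only: sum.distrib sum_subtractf frob_rows)
  also have "(\<Sum>i\<in>UNIV. norm (D$i - X *v A$i)^2) = frob_sq (D - A ** transpose X)"
    by (simp add: frob_rows r)
  finally show ?thesis .
qed

lemma trace_sq: "trace ((M::real^'n^'k) ** transpose M) = (\<Sum>i\<in>UNIV. norm (transpose M $ i)^2)"
proof -
  have "trace (M ** transpose M) = (\<Sum>k\<in>UNIV. \<Sum>j\<in>UNIV. M$k$j * M$k$j)"
    by (simp add: trace_def matrix_matrix_mult_def transpose_def)
  also have "\<dots> = (\<Sum>j\<in>UNIV. \<Sum>k\<in>UNIV. M$k$j * M$k$j)" by (rule sum.swap)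
  also have "\<dots> = (\<Sum>i\<in>UNIV. norm (transpose M $ i)^2)"
    unfolding power2_norm_eq_inner inner_vec_def by (simp add: transpose_def)
  finally show ?thesis .
qed

lemma H_orth:
  assumes "X \<in> (normalized_indicator_mats :: (real^'n^'k) set)"
  shows "X ** transpose X = mat 1"
proof -
  obtain F where F: "F \<in> indicator_mats" and XF: "X = inv_sqrt_diag (F ** transpose F) ** F"
    using assms unfolding normalized_indicator_mats_def by blast
  define d where "d k = (F ** transpose F) $ k $ k" for k
  have F01: "F $ i $ j = 0 \<or> F $ i $ j = 1" for i j using F unfolding indicator_mats_def by blast
  have Fu: "\<exists>!i. F $ i $ j = 1" for j using F unfolding indicator_mats_def by blast
  have Fne: "\<exists>j. F $ i $ j = 1" for i using F unfolding indicator_mats_def by blast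
  have d_eq: "d k = (\<Sum>j\<in>UNIV. F $ k $ j * F $ k $ j)" for k
    by (simp add: d_def matrix_matrix_mult_def transpose_def)
  have dpos: "d k > 0" for k
  proof -
    obtain j where j: "F $ k $ j = 1" using Fne by blast
    have "d k \<ge> F $ k $ j * F $ k $ j" unfolding d_eq
      by (rule member_le_sum) auto
    thus ?thesis using j by simp
  qed
  have off: "F $ k $ j * F $ l $ j = 0" if "k \<noteq> l" for k l j
    using F01[of k j] F01[of l j] Fu[of j] that by auto
  have Xe: "X $ k $ j = F $ k $ j / sqrt (d k)" for k j
    by (simp add: XF inv_sqrt_diag_def diag_mat_def matrix_matrix_mult_def d_def
        if_distrib[where f="\<lambda>x. x * _"] sum.delta cong: if_cong)
  show ?thesis
  proof (simp add: vec_eq_iff, intro allI)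
    fix k l
    show "(X ** transpose X) $ k $ l = mat 1 $ k $ l"
    proof (cases "k = l")
      case True
      have "(X ** transpose X) $ k $ l = (\<Sum>j\<in>UNIV. F $ k $ j * F $ k $ j) / (sqrt (d k) * sqrt (d k))"
        using True by (simp add: matrix_matrix_mult_def transpose_def Xe sum_divide_distrib)
      also have "\<dots> = 1" using dpos[of k] by (simp add: d_eq[symmetric])
      finally show ?thesis using True by (simp add: mat_def)
    next
      case False
      have "(X ** transpose X) $ k $ l = (\<Sum>j\<in>UNIV. F $ k $ j * F $ l $ j) / (sqrt (d k) * sqrt (d l))"
        by (simp add: matrix_matrix_mult_def transpose_def Xe sum_divide_distrib)
      also have "\<dots> = 0" by (simp add: off[OF False])
      finally show ?thesis using False by (simp add: mat_def)
    qed
  qed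
qed

lemma my_radd: "((A::real^'n^'m) + B) ** C = A ** C + B ** C"
  by (vector matrix_matrix_mult_def sum.distrib[symmetric] field_simps)

lemma diag_transpose: "transpose (diag_mat v) = diag_mat v"
  by (simp add: diag_mat_def transpose_def vec_eq_iff)

lemma diag_mult: "diag_mat v ** diag_mat w = diag_mat (\<chi> i. v$i * w$i)"
  by (simp add: diag_mat_def matrix_matrix_mult_def vec_eq_iff if_distrib[where f="\<lambda>x. x * _"] sum.delta cong: if_cong)

lemma diag_add: "diag_mat v + diag_mat w = diag_mat (v + w)"
  by (simp add: diag_mat_def vec_eq_iff)

lemma diag_const: "diag_mat (\<chi> i. c) = c *\<^sub>R mat 1"
  by (simp add: diag_mat_def mat_def vec_eq_iff)

lemma trace_scal: "trace (c *\<^sub>R (mat 1 :: real^'k^'k)) = c * real CARD('k)"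
  by (simp add: trace_def mat_def)

lemma key:
  fixes X :: "real^'n^'k" and V :: "real^'n^'n" and lam :: "real^'n" and L A :: "real^'n^'n"
  assumes XX: "X ** transpose X = mat 1"
    and Vo: "transpose V ** V = mat 1"
    and cge: "\<forall>i. lam $ i \<le> c"
    and spec: "L = transpose V ** diag_mat lam ** V"
    and A_def: "A = diag_mat (\<chi> i. sqrt (c - lam $ i)) ** V"
  shows "(\<Sum>i\<in>UNIV. norm (X *v A$i)^2) = c * real CARD('k) - trace (X ** L ** transpose X)"
proof -
  define s where "s = (\<chi> i. sqrt (c - lam $ i))"
  define P where "P = transpose A ** A"
  have r: "(A ** transpose X) $ i = X *v A $ i" for i
    by (simp add: matrix_matrix_mult_def matrix_vector_mult_def vec_eq_iff transpose_def mult.commute)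
  have "(\<Sum>i\<in>UNIV. norm (X *v A$i)^2) = trace ((X ** transpose A) ** transpose (X ** transpose A))"
    using trace_sq[of "X ** transpose A"] by (simp add: matrix_transpose_mul r)
  also have "\<dots> = trace (X ** P ** transpose X)"
    by (simp add: matrix_transpose_mul matrix_mul_assoc P_def)
  finally have e1: "(\<Sum>i\<in>UNIV. norm (X *v A$i)^2) = trace (X ** P ** transpose X)" .
  have ss: "(\<chi> i. s$i * s$i) + lam = (\<chi> i. c)"
    using cge by (simp add: s_def vec_eq_iff)
  have "P + L = transpose V ** (diag_mat s ** diag_mat s) ** V + transpose V ** diag_mat lam ** V"
    by (simp add: P_def A_def s_def[symmetric] spec matrix_transpose_mul diag_transpose matrix_mul_assoc)
  also have "\<dots> = transpose V ** (diag_mat (\<chi> i. c)) ** V"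
    by (simp only: diag_mult flip: ss diag_add matrix_add_ldistrib my_radd)
  also have "\<dots> = c *\<^sub>R mat 1"
    by (simp add: diag_const matrix_scalar_ac scalar_matrix_assoc[symmetric] Vo)
  finally have PL: "P + L = c *\<^sub>R mat 1" .
  have "X ** P ** transpose X + X ** L ** transpose X = X ** (P + L) ** transpose X"
    by (simp add: matrix_add_ldistrib my_radd)
  also have "\<dots> = c *\<^sub>R mat 1"
    by (simp add: PL matrix_scalar_ac scalar_matrix_assoc[symmetric] XX)
  finally have "trace (X ** P ** transpose X) + trace (X ** L ** transpose X) = c * real CARD('k)"
    by (metis trace_add trace_scal)
  thus ?thesis using e1 by linarith
qed

lemma frob_nonneg: "frob_sq M \<ge> 0"
  unfolding frob_sq_def by (intro sum_nonneg) auto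

lemma frob_zero: "frob_sq (0::real^'n^'m) = 0"
  unfolding frob_sq_def by simp

lemma fmain:
  fixes V :: "real^'n^'n" and lam :: "real^'n" and L A :: "real^'n^'n"
  assumes Vo: "transpose V ** V = mat 1"
    and cge: "\<forall>i. lam $ i \<le> c"
    and spec: "L = transpose V ** diag_mat lam ** V"
    and A_def: "A = diag_mat (\<chi> i. sqrt (c - lam $ i)) ** V"
    and YH: "(Y :: real^'n^'k) \<in> normalized_indicator_mats"
  shows "frob_sq (A - D ** Y) = frob_sq A - c * real CARD('k) + trace (Y ** L ** transpose Y) + frob_sq (D - A ** transpose Y)"
proof -
  have YY: "Y ** transpose Y = mat 1" using H_orth[OF YH] .
  show ?thesis using frob_id[OF YY, of A D] key[OF YY Vo cge spec A_def]
    by linarith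
qed

lemma f0main:
  fixes V :: "real^'n^'n" and lam :: "real^'n" and L A :: "real^'n^'n"
  assumes Vo: "transpose V ** V = mat 1"
    and cge: "\<forall>i. lam $ i \<le> c"
    and spec: "L = transpose V ** diag_mat lam ** V"
    and A_def: "A = diag_mat (\<chi> i. sqrt (c - lam $ i)) ** V"
    and YH: "(Y :: real^'n^'k) \<in> normalized_indicator_mats"
  shows "frob_sq (A - (A ** transpose Y) ** Y) = frob_sq A - c * real CARD('k) + trace (Y ** L ** transpose Y)"
  using fmain[OF assms, of "A ** transpose Y"] by (simp add: frob_zero)

lemma abstract_eq:
  fixes g :: "'d \<Rightarrow> 'x \<Rightarrow> real"
  assumes e: "\<forall>Y\<in>S. \<forall>D. g D Y = C + t Y + h D Y"
    and hn: "\<forall>D Y. 0 \<le> h D Y"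
    and h0: "\<forall>Y\<in>S. h (dz Y) Y = 0"
  shows "{X. X \<in> S \<and> (\<forall>Y\<in>S. t X \<le> t Y)} = {X. X \<in> S \<and> (\<exists>D. \<forall>D'. \<forall>Y\<in>S. g D X \<le> g D' Y)}"
proof (intro set_eqI iffI)
  fix X assume "X \<in> {X. X \<in> S \<and> (\<forall>Y\<in>S. t X \<le> t Y)}"
  hence XS: "X \<in> S" and mn: "\<And>Y. Y \<in> S \<Longrightarrow> t X \<le> t Y" by auto
  have "\<forall>D'. \<forall>Y\<in>S. g (dz X) X \<le> g D' Y"
  proof (intro allI ballI)
    fix D' Y assume YS: "Y \<in> S"
    have "g (dz X) X = C + t X" using e XS h0 by simp
    also have "\<dots> \<le> C + t Y + h D' Y" using mn[OF YS] hn by (smt (verit))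
    also have "\<dots> = g D' Y" using e YS by simp
    finally show "g (dz X) X \<le> g D' Y" .
  qed
  thus "X \<in> {X. X \<in> S \<and> (\<exists>D. \<forall>D'. \<forall>Y\<in>S. g D X \<le> g D' Y)}" using XS by blast
next
  fix X assume "X \<in> {X. X \<in> S \<and> (\<exists>D. \<forall>D'. \<forall>Y\<in>S. g D X \<le> g D' Y)}"
  then obtain D where XS: "X \<in> S" and mn: "\<And>D' Y. Y \<in> S \<Longrightarrow> g D X \<le> g D' Y" by auto
  have "t X \<le> t Y" if YS: "Y \<in> S" for Y
  proof -
    have "C + t X \<le> g D X" using e XS hn by (smt (verit))
    also have "\<dots> \<le> g (dz Y) Y" using mn[OF YS] .
    also have "\<dots> = C + t Y" using e YS h0 by simp
    finally show ?thesis by simp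
  qed
  thus "X \<in> {X. X \<in> S \<and> (\<forall>Y\<in>S. t X \<le> t Y)}" using XS by blast
qed

theorem proposition4:
  fixes W :: "real^('n::{finite,linorder})^('n::{finite,linorder})"
    and V :: "real^('n::{finite,linorder})^('n::{finite,linorder})"
    and lam :: "real^('n::{finite,linorder})"
    and L :: "real^('n::{finite,linorder})^('n::{finite,linorder})"
    and A :: "real^('n::{finite,linorder})^('n::{finite,linorder})"
  assumes W_sym: "transpose W = W"
    and W_nonneg: "\<forall>i j. W $ i $ j \<ge> 0"
    and L_def: "L = diag_mat (W *v ones) - W"
    and V_orth: "orthogonal_matrix V"
    and lam_sorted: "\<forall>i j. i \<le> j \<longrightarrow> lam $ i \<le> lam $ j"
    and spec: "L = transpose V ** diag_mat lam ** V"
    and A_def: "A = diag_mat (\<chi> i. sqrt (lam $ (Max UNIV) - lam $ i)) ** V"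
  shows "{X :: real^('n::{finite,linorder})^('k::finite). X \<in> normalized_indicator_mats \<and>
            (\<forall>Y :: real^('n::{finite,linorder})^('k::finite) \<in> normalized_indicator_mats. trace (X ** L ** transpose X) \<le> trace (Y ** L ** transpose Y))}
       = {X :: real^('n::{finite,linorder})^('k::finite). X \<in> normalized_indicator_mats \<and>
            (\<exists>D :: real^('k::finite)^('n::{finite,linorder}). \<forall>D' :: real^('k::finite)^('n::{finite,linorder}). \<forall>Y :: real^('n::{finite,linorder})^('k::finite) \<in> normalized_indicator_mats.
               frob_sq (A - D ** X) \<le> frob_sq (A - D' ** Y))}"
proof -
  define c where "c = lam $ Max UNIV"
  have cge: "\<forall>i. lam $ i \<le> c" unfolding c_def using lam_sorted by (simp add: Max_ge)
  have Vo: "transpose V ** V = mat 1" using V_orth orthogonal_matrix by blast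
  have A': "A = diag_mat (\<chi> i. sqrt (c - lam $ i)) ** V" unfolding c_def by (rule A_def)
  show ?thesis
    apply (rule abstract_eq[where g="\<lambda>D Y. frob_sq (A - D ** Y)" and t="\<lambda>Y. trace (Y ** L ** transpose Y)" and h="\<lambda>D Y. frob_sq (D - A ** transpose Y)" and dz="\<lambda>Y. A ** transpose Y"])
      apply (intro ballI allI)
      apply (subst fmain[OF Vo cge spec A'])
       apply assumption
      apply (rule refl)
     apply (simp add: frob_nonneg)
    apply (simp add: frob_zero)
    done
qed

end
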